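(* Let $\mathcal{P}$ be a finite set of passwords, $R_1,\dots,R_m\subseteq\mathcal{P}$ positive rules, and $\ell_1,\dots,\ell_n$ rankings of $\mathcal{P}$. Consider IterativeElimination: set $S_0=[m]$, $i=0$; while $S_i\neq\emptyset$, let $w(S_i)$ be a password maximizing $\Pr[w\mid\mathcal{A}_{S_i}]$ over $w\in\mathcal{A}_{S_i}$, set $S_{i+1}=S_i\setminus\{j : w(S_i)\in R_j\}$ and increase $i$; finally return $S_{i^*}$ where $i^*$ minimizes $p(1,\mathcal{A}_{S_i})$ over the nonempty sets $S_i$ produced. Then the returned set $S$ satisfies $p(1,\mathcal{A}_S)\le p(1,\mathcal{A}_{S'})$ for every $S'\subseteq[m]$ (with $\mathcal{A}_{S'}\ne\emptyset$).
   Context: Positive rules setting: for $S\subseteq[m]$, the policy is $\mathcal{A}_S=\bigcup_{i\in S}R_i$. Ranking model: user $i$, under policy $\mathcal{A}$, chooses the most preferred (according to $\ell_i$) password in $\mathcal{A}$; $\Pr[w\mid\mathcal{A}]=\frac1n|\{i: \text{user } i\text{ chooses } w\}|$. $p(1,\mathcal{A})=\max_{w\in\mathcal{A}}\Pr[w\mid\mathcal{A}]$, the probability of the most popular allowed password. *)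

theory Defs
  imports Complex_Main
begin

text \<open>Users are indexed by {1..n}; user i has ranking l i, a bijection from P onto
{1..card P}, rank 1 being the most preferred password.\<close>

definition is_ranking :: "'p set \<Rightarrow> ('p \<Rightarrow> nat) \<Rightarrow> bool" where
  "is_ranking P r \<longleftrightarrow> bij_betw r P {1..card P}"

definition policy :: "(nat \<Rightarrow> 'p set) \<Rightarrow> nat set \<Rightarrow> 'p set" where
  "policy R S = (\<Union>j\<in>S. R j)"

definition choice :: "('p \<Rightarrow> nat) \<Rightarrow> 'p set \<Rightarrow> 'p" where
  "choice r A = (THE w. w \<in> A \<and> (\<forall>v\<in>A. r w \<le> r v))"

definition Pr :: "nat \<Rightarrow> (nat \<Rightarrow> 'p \<Rightarrow> nat) \<Rightarrow> 'p \<Rightarrow> 'p set \<Rightarrow> real" where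
  "Pr n l w A = real (card {i\<in>{1..n}. choice (l i) A = w}) / real n"

definition p1 :: "nat \<Rightarrow> (nat \<Rightarrow> 'p \<Rightarrow> nat) \<Rightarrow> 'p set \<Rightarrow> real" where
  "p1 n l A = Max ((\<lambda>w. Pr n l w A) ` A)"

text \<open>Ties (in the choice of w i) may be broken arbitrarily.\<close>
definition IE_run :: "nat \<Rightarrow> (nat \<Rightarrow> 'p \<Rightarrow> nat) \<Rightarrow> nat \<Rightarrow> (nat \<Rightarrow> 'p set)
    \<Rightarrow> (nat \<Rightarrow> nat set) \<Rightarrow> (nat \<Rightarrow> 'p) \<Rightarrow> nat \<Rightarrow> bool" where
  "IE_run n l m R S w k \<longleftrightarrow>
     S 0 = {1..m} \<and> S k = {} \<and>
     (\<forall>i<k. S i \<noteq> {} \<and>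
        w i \<in> policy R (S i) \<and>
        (\<forall>v\<in>policy R (S i). Pr n l v (policy R (S i)) \<le> Pr n l (w i) (policy R (S i))) \<and>
        S (Suc i) = S i - {j. w i \<in> R j})"

definition IE_output :: "nat \<Rightarrow> (nat \<Rightarrow> 'p \<Rightarrow> nat) \<Rightarrow> nat \<Rightarrow> (nat \<Rightarrow> 'p set)
    \<Rightarrow> nat set \<Rightarrow> bool" where
  "IE_output n l m R T \<longleftrightarrow>
     (\<exists>S w k istar. IE_run n l m R S w k \<and> istar < k \<and>
        (\<forall>i<k. p1 n l (policy R (S istar)) \<le> p1 n l (policy R (S i))) \<and>
        T = S istar)"

end

theory Submission
  imports Defs
begin

lemma choice_prop:
  assumes "finite A" "A \<noteq> {}" "inj_on r A"
  shows "choice r A \<in> A \<and> (\<forall>v\<in>A. r (choice r A) \<le> r v)"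
proof -
  obtain w where w: "w \<in> A" "\<forall>v\<in>A. r w \<le> r v"
  proof -
    have "Min (r ` A) \<in> r ` A" using assms by (intro Min_in) auto
    then obtain w where "w \<in> A" "r w = Min (r ` A)" by auto
    moreover have "\<forall>v\<in>A. Min (r ` A) \<le> r v" using assms(1) by simp
    ultimately show ?thesis using that by auto
  qed
  have "choice r A = w" unfolding choice_def
  proof (rule the_equality)
    show "w \<in> A \<and> (\<forall>v\<in>A. r w \<le> r v)" using w by blast
    fix x assume "x \<in> A \<and> (\<forall>v\<in>A. r x \<le> r v)"
    then show "x = w" using w assms(3) by (meson antisym inj_onD)
  qed
  then show ?thesis using w by simp
qed

lemma choice_sub:
  assumes "finite A" "inj_on r A" "B \<subseteq> A" "w \<in> B" "choice r A = w"
  shows "choice r B = w"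
proof -
  have A: "w \<in> A \<and> (\<forall>v\<in>A. r w \<le> r v)" using choice_prop[of A r] assms by auto
  show ?thesis unfolding choice_def
  proof (rule the_equality)
    show "w \<in> B \<and> (\<forall>v\<in>B. r w \<le> r v)" using A assms by blast
    fix x assume "x \<in> B \<and> (\<forall>v\<in>B. r x \<le> r v)"
    then show "x = w" using A assms by (meson antisym inj_onD subsetD)
  qed
qed

theorem theorem3p3:
  fixes P :: "'p set" and R :: "nat \<Rightarrow> 'p set" and l :: "nat \<Rightarrow> 'p \<Rightarrow> nat"
    and m n :: nat and T :: "nat set"
  assumes "finite P"
    and "\<forall>j\<in>{1..m}. R j \<subseteq> P"
    and "\<forall>i\<in>{1..n}. is_ranking P (l i)"
    and "IE_output n l m R T"
  shows "\<forall>S'. S' \<subseteq> {1..m} \<and> policy R S' \<noteq> {} \<longrightarrow>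
           p1 n l (policy R T) \<le> p1 n l (policy R S')"
proof (intro allI impI)
  fix S' assume S': "S' \<subseteq> {1..m} \<and> policy R S' \<noteq> {}"
  obtain S w k istar where run: "IE_run n l m R S w k" and ik: "istar < k"
    and mn: "\<forall>i<k. p1 n l (policy R (S istar)) \<le> p1 n l (policy R (S i))"
    and T: "T = S istar"
    using assms(4) unfolding IE_output_def by blast
  note run' = run[unfolded IE_run_def]
  have Ssub: "i \<le> k \<Longrightarrow> S i \<subseteq> {1..m}" for i
  proof (induction i)
    case 0 then show ?case using run' by simp
  next
    case (Suc i) then show ?case using run' by auto
  qed
  have polP: "X \<subseteq> {1..m} \<Longrightarrow> policy R X \<subseteq> P" for X
    using assms(2) unfolding policy_def by blast
  have inj: "i \<in> {1..n} \<Longrightarrow> inj_on (l i) P" for i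
    using assms(3) unfolding is_ranking_def bij_betw_def by blast
  have "S' \<noteq> {}" using S' unfolding policy_def by auto
  have "\<exists>i<k. S' \<subseteq> S i \<and> \<not> S' \<subseteq> S (Suc i)"
  proof (rule ccontr)
    assume H: "\<not> ?thesis"
    have "i \<le> k \<Longrightarrow> S' \<subseteq> S i" for i
    proof (induction i)
      case 0 then show ?case using run' S' by simp
    next
      case (Suc i) then show ?case using H by auto
    qed
    then have "S' \<subseteq> S k" by simp
    then show False using run' \<open>S' \<noteq> {}\<close> by simp
  qed
  then obtain i where i: "i < k" "S' \<subseteq> S i" "\<not> S' \<subseteq> S (Suc i)" by blast
  define A where "A = policy R (S i)"
  define B where "B = policy R S'"
  have wi: "w i \<in> A" "\<forall>v\<in>A. Pr n l v A \<le> Pr n l (w i) A"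
    "S (Suc i) = S i - {j. w i \<in> R j}"
    using run' i(1) unfolding A_def by auto
  have wB: "w i \<in> B" using i wi(3) unfolding B_def policy_def by blast
  have AP: "A \<subseteq> P" using polP Ssub i(1) unfolding A_def by simp
  have BA: "B \<subseteq> A" using i(2) unfolding A_def B_def policy_def by blast
  have finA: "finite A" using AP assms(1) finite_subset by blast
  have finB: "finite B" using BA finA finite_subset by blast
  have p1A: "p1 n l A = Pr n l (w i) A"
    unfolding p1_def using wi finA by (intro Max_eqI) auto
  have "{u\<in>{1..n}. choice (l u) A = w i} \<subseteq> {u\<in>{1..n}. choice (l u) B = w i}"
  proof
    fix u assume "u \<in> {u\<in>{1..n}. choice (l u) A = w i}"
    then have u: "u \<in> {1..n}" "choice (l u) A = w i" by auto
    have "inj_on (l u) A" using inj[OF u(1)] AP inj_on_subset by blast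
    then show "u \<in> {u\<in>{1..n}. choice (l u) B = w i}"
      using choice_sub[OF finA _ BA wB u(2)] u by auto
  qed
  then have "Pr n l (w i) A \<le> Pr n l (w i) B"
    unfolding Pr_def by (intro divide_right_mono) (auto intro: card_mono)
  also have "\<dots> \<le> p1 n l B"
    unfolding p1_def using finB wB by (intro Max_ge) auto
  finally have "p1 n l A \<le> p1 n l B" using p1A by simp
  moreover have "p1 n l (policy R T) \<le> p1 n l A" using mn i(1) T unfolding A_def by simp
  ultimately show "p1 n l (policy R T) \<le> p1 n l (policy R S')" unfolding B_def by simp
qed

end
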